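(* Let $b \ge 2$ be an integer, let $m = 2b+1$, and let $f(x) = x^{2b+1} + x^{b+1} + x^{b} + x + 1 \in \mathbb{F}_2[x]$. There is a fixed, input-independent straight-line program using no AND operations and exactly $6b+1 = 3m-2$ two-input XOR operations, of XOR depth $3$ (i.e. time delay $3T_X$), which, on input the coefficient bits $d_0,\dots,d_{2m-2}$ of an arbitrary polynomial $D(x)=\sum_{i=0}^{2m-2} d_i x^i \in \mathbb{F}_2[x]$ of degree at most $2m-2$, outputs the $m$ coefficient bits of the remainder of $D$ upon division by $f$ (the unique polynomial of degree less than $m$ congruent to $D$ modulo $f$).
   Context: A straight-line program (bit-parallel circuit) over $\mathbb{F}_2$ here is a sequence of gates, each computing the XOR (sum in $\mathbb{F}_2$) of two values that are either input bits or outputs of earlier gates; each output bit is an input bit or a gate output. The number of XOR operations is the number of gates. $T_X$ denotes the delay of one 2-input XOR gate, and the time delay of the program is $T_X$ times the maximum number of gates on any path from an input to an output. *)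

theory Defs
  imports "HOL-Library.Z2" "HOL-Computational_Algebra.Polynomial"
begin

text \<open>A wire is either an input bit
  (index i) or the output of a gate (index j, counted from 0 in program order).
  A program is the list of its gates (each gate XORs two wires) together with
  a list of output wires.\<close>

datatype wire = Inp nat | Gate nat

type_synonym slp = "(wire \<times> wire) list"

definition wire_ok :: "nat \<Rightarrow> nat \<Rightarrow> wire \<Rightarrow> bool" where
  "wire_ok n k w = (case w of Inp i \<Rightarrow> i < n | Gate j \<Rightarrow> j < k)"

definition slp_wf :: "nat \<Rightarrow> slp \<Rightarrow> wire list \<Rightarrow> bool" where
  "slp_wf n gs outs =
     ((\<forall>j < length gs. wire_ok n j (fst (gs ! j)) \<and> wire_ok n j (snd (gs ! j)))
      \<and> (\<forall>w \<in> set outs. wire_ok n (length gs) w))"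

fun wire_val :: "(nat \<Rightarrow> bit) \<Rightarrow> bit list \<Rightarrow> wire \<Rightarrow> bit" where
  "wire_val d vs (Inp i) = d i"
| "wire_val d vs (Gate j) = vs ! j"

definition gate_vals :: "(nat \<Rightarrow> bit) \<Rightarrow> slp \<Rightarrow> bit list" where
  "gate_vals d gs =
     foldl (\<lambda>vs (a, b). vs @ [wire_val d vs a + wire_val d vs b]) [] gs"

definition slp_eval :: "slp \<Rightarrow> wire list \<Rightarrow> (nat \<Rightarrow> bit) \<Rightarrow> bit list" where
  "slp_eval gs outs d = map (wire_val d (gate_vals d gs)) outs"

fun wire_depth :: "nat list \<Rightarrow> wire \<Rightarrow> nat" where
  "wire_depth ds (Inp i) = 0"
| "wire_depth ds (Gate j) = ds ! j"

definition gate_depths :: "slp \<Rightarrow> nat list" where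
  "gate_depths gs =
     foldl (\<lambda>ds (a, b). ds @ [Suc (max (wire_depth ds a) (wire_depth ds b))]) [] gs"

definition slp_depth :: "slp \<Rightarrow> wire list \<Rightarrow> nat" where
  "slp_depth gs outs = Max (set (map (wire_depth (gate_depths gs)) outs))"

definition pentanomial :: "nat \<Rightarrow> bit poly" where
  "pentanomial b = monom 1 (2*b+1) + monom 1 (b+1) + monom 1 b + monom 1 1 + 1"

end

theory Submission
  imports Defs
begin


definition gwf :: "nat \<Rightarrow> slp \<Rightarrow> bool" where
  "gwf n gs = (\<forall>j < length gs. wire_ok n j (fst (gs ! j)) \<and> wire_ok n j (snd (gs ! j)))"

lemma gate_vals_snoc: "gate_vals d (gs @ [(a,c)]) = gate_vals d gs @ [wire_val d (gate_vals d gs) a + wire_val d (gate_vals d gs) c]"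
  by (simp add: gate_vals_def)

lemma gate_depths_snoc: "gate_depths (gs @ [(a,c)]) = gate_depths gs @ [Suc (max (wire_depth (gate_depths gs) a) (wire_depth (gate_depths gs) c))]"
  by (simp add: gate_depths_def)

lemma gate_vals_Nil[simp]: "gate_vals d [] = []" by (simp add: gate_vals_def)
lemma gate_depths_Nil[simp]: "gate_depths [] = []" by (simp add: gate_depths_def)

lemma length_gate_vals[simp]: "length (gate_vals d gs) = length gs"
  by (induction gs rule: rev_induct) (auto simp: gate_vals_snoc)

lemma length_gate_depths[simp]: "length (gate_depths gs) = length gs"
  by (induction gs rule: rev_induct) (auto simp: gate_depths_snoc)

lemma wire_val_app: "wire_ok n k w \<Longrightarrow> k \<le> length V \<Longrightarrow> wire_val d (V @ W) w = wire_val d V w"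
  by (cases w) (auto simp: wire_ok_def nth_append)

lemma wire_depth_app: "wire_ok n k w \<Longrightarrow> k \<le> length V \<Longrightarrow> wire_depth (V @ W) w = wire_depth V w"
  by (cases w) (auto simp: wire_ok_def nth_append)

lemma gwf_snoc: "gwf n (gs @ [g]) \<Longrightarrow> gwf n gs"
  unfolding gwf_def by (auto simp: nth_append) (metis less_SucI)+

lemma gv_nth: "gwf n gs \<Longrightarrow> j < length gs \<Longrightarrow>
   gate_vals d gs ! j = wire_val d (gate_vals d gs) (fst (gs!j)) + wire_val d (gate_vals d gs) (snd (gs!j))"
proof (induction gs rule: rev_induct)
  case Nil then show ?case by simp
next
  case (snoc g gs)
  obtain a c where g: "g = (a,c)" by fastforce
  have w: "gwf n gs" using snoc gwf_snoc by blast
  show ?case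
  proof (cases "j < length gs")
    case True
    have ok: "wire_ok n j (fst (gs!j))" "wire_ok n j (snd (gs!j))" using w True by (auto simp: gwf_def)
    show ?thesis using snoc.IH[OF w True] True g ok
      by (simp add: gate_vals_snoc nth_append wire_val_app[OF ok(1)] wire_val_app[OF ok(2)])
  next
    case False
    then have j: "j = length gs" using snoc by simp
    have ok: "wire_ok n (length gs) a" "wire_ok n (length gs) c" using snoc.prems(1) g
      by (auto simp: gwf_def nth_append dest: spec[of _ "length gs"])
    show ?thesis using j g
      by (simp add: gate_vals_snoc nth_append wire_val_app[OF ok(1)] wire_val_app[OF ok(2)])
  qed
qed

lemma gd_nth: "gwf n gs \<Longrightarrow> j < length gs \<Longrightarrow>
   gate_depths gs ! j = Suc (max (wire_depth (gate_depths gs) (fst (gs!j))) (wire_depth (gate_depths gs) (snd (gs!j))))"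
proof (induction gs rule: rev_induct)
  case Nil then show ?case by simp
next
  case (snoc g gs)
  obtain a c where g: "g = (a,c)" by fastforce
  have w: "gwf n gs" using snoc gwf_snoc by blast
  show ?case
  proof (cases "j < length gs")
    case True
    have ok: "wire_ok n j (fst (gs!j))" "wire_ok n j (snd (gs!j))" using w True by (auto simp: gwf_def)
    show ?thesis using snoc.IH[OF w True] True g ok
      by (simp add: gate_depths_snoc nth_append wire_depth_app[OF ok(1)] wire_depth_app[OF ok(2)])
  next
    case False
    then have j: "j = length gs" using snoc by simp
    have ok: "wire_ok n (length gs) a" "wire_ok n (length gs) c" using snoc.prems(1) g
      by (auto simp: gwf_def nth_append dest: spec[of _ "length gs"])
    show ?thesis using j g
      by (simp add: gate_depths_snoc nth_append wire_depth_app[OF ok(1)] wire_depth_app[OF ok(2)])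
  qed
qed



lemma bit_poly_neg: "-(a::bit poly) = a"
  by (simp add: poly_eq_iff)

lemma coeff_monsum: "coeff (\<Sum>j<n. monom (a j) j) i = (if i < n then a i else 0)"
  by (induction n) auto

lemma degree_monsum: "n \<le> Suc k \<Longrightarrow> degree (\<Sum>j<n. monom (a j) j) \<le> k"
  by (rule degree_le) (auto simp: coeff_monsum)

lemma sum_split_nat: "(\<Sum>i<a+n. f i) = (\<Sum>i<a. f i) + (\<Sum>j<(n::nat). f (a+j))"
  by (induction n) (auto simp: add.assoc)

definition hf :: "(nat \<Rightarrow> bit) \<Rightarrow> nat \<Rightarrow> nat \<Rightarrow> bit" where
  "hf d c i = (if i < 2*c+2 then d (2*c+3+i) else 0)"

definition gf :: "(nat \<Rightarrow> bit) \<Rightarrow> nat \<Rightarrow> nat \<Rightarrow> bit" where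
  "gf d c n = hf d c n + (if n < 1 then 0 else hf d c (n-1)) + (if n < c+1 then 0 else hf d c (n-(c+1)))
     + (if n < c+2 then 0 else hf d c (n-(c+2)))"

definition ghf :: "(nat \<Rightarrow> bit) \<Rightarrow> nat \<Rightarrow> nat \<Rightarrow> bit" where
  "ghf d c j = (if j < c+1 then gf d c (2*c+3+j) else 0)"

definition rhs :: "(nat \<Rightarrow> bit) \<Rightarrow> nat \<Rightarrow> nat \<Rightarrow> bit" where
  "rhs d c k = d k + gf d c k + ghf d c k + (if k < 1 then 0 else ghf d c (k-1))
     + (if k < c+1 then 0 else ghf d c (k-(c+1))) + (if k < c+2 then 0 else ghf d c (k-(c+2)))"

lemma coeff_p_mult:
  "coeff ((monom 1 (c+2) + monom 1 (c+1) + monom 1 1 + 1) * q) n =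
    coeff q n + (if n < 1 then 0 else coeff q (n-1)) + (if n < c+1 then 0 else coeff q (n-(c+1)))
     + (if n < c+2 then 0 else coeff q (n-(c+2)))"
  by (simp add: distrib_right coeff_monom_mult add_ac)

lemma remainder:
  fixes d :: "nat \<Rightarrow> bit" and c k :: nat
  assumes "k < 2*c+3"
  shows "coeff ((\<Sum>i < 4*c+5. monom (d i) i) mod pentanomial (Suc c)) k = rhs d c k"
proof -
  define m where "m = 2*c+3"
  define p :: "bit poly" where "p = monom 1 (c+2) + monom 1 (c+1) + monom 1 1 + 1"
  define L where "L = (\<Sum>i<m. monom (d i) i)"
  define H where "H = (\<Sum>j<2*c+2. monom (d (m+j)) j)"
  define G where "G = p * H"
  define Glo where "Glo = (\<Sum>j<m. monom (coeff G j) j)"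
  define Ghi where "Ghi = (\<Sum>j<c+1. monom (coeff G (m+j)) j)"
  define R where "R = L + Glo + p * Ghi"
  define f where "f = pentanomial (Suc c)"
  have degp: "degree p \<le> c+2" unfolding p_def
    by (intro degree_add_le degree_monom_le[THEN order.trans]) auto
  have degH: "degree H \<le> 2*c+1" unfolding H_def
    by (rule degree_monsum) simp
  have degG: "degree G \<le> 3*c+3" unfolding G_def
    using degree_mult_le[of p H] degp degH by linarith
  have D: "(\<Sum>i < 4*c+5. monom (d i) i) = L + monom 1 m * H"
  proof -
    have "(\<Sum>i < 4*c+5. monom (d i) i) = (\<Sum>i < m + (2*c+2). monom (d i) i)"
      by (rule arg_cong[where f="\<lambda>t. \<Sum>i<t. monom (d i) i"]) (simp add: m_def)
    also have "\<dots> = L + (\<Sum>j<2*c+2. monom (d (m+j)) (m+j))" unfolding L_def by (rule sum_split_nat)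
    also have "(\<Sum>j<2*c+2. monom (d (m+j)) (m+j)) = monom 1 m * H"
      unfolding H_def sum_distrib_left mult_monom mult_1 by (rule refl)
    finally show ?thesis .
  qed
  have GG: "Glo = G - monom 1 m * Ghi"
  proof -
    have "coeff (Glo + monom 1 m * Ghi) n = coeff G n" for n
    proof (cases "n < m")
      case True then show ?thesis by (simp add: Glo_def Ghi_def coeff_monsum coeff_monom_mult)
    next
      case False
      have "coeff G n = 0" if "\<not> n - m < c+1" using that False degG
        by (intro coeff_eq_0) (simp add: m_def)
      with False show ?thesis by (simp add: Glo_def Ghi_def coeff_monsum coeff_monom_mult)
    qed
    then have "Glo + monom 1 m * Ghi = G" by (simp add: poly_eq_iff)
    then show ?thesis by (simp add: algebra_simps)
  qed
  have fp0: "f = monom 1 m + p"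
    unfolding f_def pentanomial_def p_def m_def by (simp add: add.assoc numeral_3_eq_3)
  have fp: "f = monom 1 m - p"
    unfolding fp0 diff_conv_add_uminus bit_poly_neg ..
  have id: "(\<Sum>i < 4*c+5. monom (d i) i) = (H + Ghi) * f + R"
    unfolding D R_def GG fp G_def by (simp add: algebra_simps)
  have degR: "degree R < m"
  proof -
    have "degree L \<le> 2*c+2" unfolding L_def m_def by (rule degree_monsum) simp
    moreover have "degree Glo \<le> 2*c+2" unfolding Glo_def m_def by (rule degree_monsum) simp
    moreover have "degree Ghi \<le> c" unfolding Ghi_def by (rule degree_monsum) simp
    then have "degree (p * Ghi) \<le> 2*c+2" using degree_mult_le[of p Ghi] degp by linarith
    ultimately have "degree R \<le> 2*c+2" unfolding R_def by (intro degree_add_le)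
    then show ?thesis unfolding m_def by linarith
  qed
  have degf: "degree f = m"
  proof -
    have "f = monom 1 m + p" by (rule fp0)
    moreover have "degree p < degree (monom (1::bit) m)" using degp by (simp add: degree_monom_eq m_def)
    ultimately show ?thesis by (simp add: degree_add_eq_left degree_monom_eq)
  qed
  have "(\<Sum>i < 4*c+5. monom (d i) i) mod f = R"
    unfolding id using degR degf by (simp add: mod_poly_less)
  moreover have "coeff R k = rhs d c k"
  proof -
    have cH: "coeff H i = hf d c i" for i unfolding H_def coeff_monsum hf_def m_def ..
    have cG: "coeff G i = gf d c i" for i unfolding G_def p_def coeff_p_mult cH gf_def ..
    have cGh: "coeff Ghi i = ghf d c i" for i unfolding Ghi_def coeff_monsum cG ghf_def m_def ..
    have km: "k < m" using assms by (simp add: m_def)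
    have "coeff R k = coeff L k + coeff Glo k + coeff (p*Ghi) k" by (simp only: R_def coeff_add)
    also have "coeff L k = d k" unfolding L_def coeff_monsum using km by (simp only: if_P)
    also have "coeff Glo k = gf d c k" unfolding Glo_def coeff_monsum cG using km by (simp only: if_P)
    also have "coeff (p*Ghi) k = ghf d c k + (if k < 1 then 0 else ghf d c (k-1))
     + (if k < c+1 then 0 else ghf d c (k-(c+1))) + (if k < c+2 then 0 else ghf d c (k-(c+2)))"
      unfolding p_def coeff_p_mult cGh ..
    finally show ?thesis unfolding rhs_def by (simp only: add.assoc)
  qed
  ultimately show ?thesis by (simp add: f_def)
qed



lemma bit_self[simp]: "(x::bit) + x = 0" "(x::bit) + (x + y) = y"
  by (cases x; simp)+

definition hw :: "nat \<Rightarrow> nat \<Rightarrow> wire" where "hw c j = Inp (2*c+3+j)"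
definition zw :: "nat \<Rightarrow> nat \<Rightarrow> wire" where "zw c i = (if i+1 = c then Gate (8+i) else Gate (8+c+i))"

definition gfun :: "nat \<Rightarrow> nat \<Rightarrow> wire \<times> wire" where
 "gfun c j =
 (if j = 0 then (hw c 0, hw c (c+2))
 else if j = 1 then (Inp 0, hw c (c+1))
 else if j = 2 then (Gate 1, Gate 0)
 else if j = 3 then (Inp (c+1), hw c (2*c+1))
 else if j = 4 then (Gate 0, hw c c)
 else if j = 5 then (Gate 3, Gate 4)
 else if j = 6 then (Inp (2*c+2), hw c c)
 else if j = 7 then (Gate 6, hw c (c+1))
 else if j < 8+c then (hw c (j-8), hw c (j-7))
 else if j < 7+2*c then (Gate (j-c), hw c (j-5))
 else if j < 7+3*c then (Inp (j-6-2*c), hw c (j-6-c))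
 else if j < 7+4*c then (Inp (j-5-2*c), hw c (j-5-2*c))
 else if j < 7+5*c then (Gate (j-2*c), zw c (j-7-4*c))
 else (Gate (j-2*c), zw c (j-7-5*c)))"

definition ofun :: "nat \<Rightarrow> nat \<Rightarrow> wire" where
 "ofun c k = (if k = 0 then Gate 2 else if k \<le> c then Gate (6+4*c+k) else if k = c+1 then Gate 5
   else if k \<le> 2*c+1 then Gate (5+4*c+k) else Gate 7)"

definition gsc :: "nat \<Rightarrow> slp" where "gsc c = map (gfun c) [0..<6*c+7]"
definition outc :: "nat \<Rightarrow> wire list" where "outc c = map (ofun c) [0..<2*c+3]"

lemma g_0: "gfun c 0 = (hw c 0, hw c (c+2))" by (simp add: gfun_def)
lemma g_1: "gfun c 1 = (Inp 0, hw c (c+1))" by (simp add: gfun_def)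
lemma g_1': "gfun c (Suc 0) = (Inp 0, hw c (c+1))" by (simp add: gfun_def)
lemma g_2: "gfun c 2 = (Gate 1, Gate 0)" by (simp add: gfun_def)
lemma g_3: "gfun c 3 = (Inp (c+1), hw c (2*c+1))" by (simp add: gfun_def)
lemma g_4: "gfun c 4 = (Gate 0, hw c c)" by (simp add: gfun_def)
lemma g_5: "gfun c 5 = (Gate 3, Gate 4)" by (simp add: gfun_def)
lemma g_6: "gfun c 6 = (Inp (2*c+2), hw c c)" by (simp add: gfun_def)
lemma g_7: "gfun c 7 = (Gate 6, hw c (c+1))" by (simp add: gfun_def)
lemma g_A: "i < c \<Longrightarrow> gfun c (8+i) = (hw c i, hw c (i+1))" by (simp add: gfun_def)
lemma g_Z: "i+1 < c \<Longrightarrow> gfun c (8+c+i) = (Gate (8+i), hw c (c+3+i))" by (simp add: gfun_def hw_def)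
lemma g_L: "i < c \<Longrightarrow> gfun c (7+2*c+i) = (Inp (i+1), hw c (c+1+i))" by (simp add: gfun_def)
lemma g_H: "i < c \<Longrightarrow> gfun c (7+3*c+i) = (Inp (c+2+i), hw c (c+2+i))" by (simp add: gfun_def)
lemma g_OL: "i < c \<Longrightarrow> gfun c (7+4*c+i) = (Gate (7+2*c+i), zw c i)" by (simp add: gfun_def)
lemma g_OH: "i < c \<Longrightarrow> gfun c (7+5*c+i) = (Gate (7+3*c+i), zw c i)" by (simp add: gfun_def)

lemma gall:
  assumes "1 \<le> (c::nat)" "(j::nat) < 6*c+7"
   "P 0 \<and> P 1 \<and> P 2 \<and> P 3 \<and> P 4 \<and> P 5 \<and> P 6 \<and> P 7" "\<And>i. i < c \<Longrightarrow> P (8+i)" "\<And>i. i+1 < c \<Longrightarrow> P (8+c+i)"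
   "\<And>i. i < c \<Longrightarrow> P (7+2*c+i)" "\<And>i. i < c \<Longrightarrow> P (7+3*c+i)"
   "\<And>i. i < c \<Longrightarrow> P (7+4*c+i)" "\<And>i. i < c \<Longrightarrow> P (7+5*c+i)"
  shows "P j"
proof -
  consider "j < 8" | "8 \<le> j" "j < 8+c" | "8+c \<le> j" "j < 7+2*c" | "7+2*c \<le> j" "j < 7+3*c"
    | "7+3*c \<le> j" "j < 7+4*c" | "7+4*c \<le> j" "j < 7+5*c" | "7+5*c \<le> j" "j < 7+6*c"
    using assms(1,2) by linarith
  then show ?thesis
  proof cases
    case 1 then have "j = 0 \<or> j = 1 \<or> j = 2 \<or> j = 3 \<or> j = 4 \<or> j = 5 \<or> j = 6 \<or> j = 7" by linarith
    then show ?thesis using assms(3) by blast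
  next
    case 2 then show ?thesis using assms(4)[of "j-8"] by simp
  next
    case 3 then show ?thesis using assms(5)[of "j-8-c"] by simp
  next
    case 4 then show ?thesis using assms(6)[of "j-7-2*c"] by simp
  next
    case 5 then show ?thesis using assms(7)[of "j-7-3*c"] by simp
  next
    case 6 then show ?thesis using assms(8)[of "j-7-4*c"] by simp
  next
    case 7 then show ?thesis using assms(9)[of "j-7-5*c"] by simp
  qed
qed

lemma oall:
  assumes "(k::nat) < 2*c+3" "P 0" "\<And>i. i < c \<Longrightarrow> P (i+1)" "P (c+1)" "\<And>i. i < c \<Longrightarrow> P (c+2+i)" "P (2*c+2)"
  shows "P k"
proof -
  consider "k = 0" | "1 \<le> k" "k \<le> c" | "k = c+1" | "c+2 \<le> k" "k < 2*c+2" | "k = 2*c+2"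
    using assms(1) by linarith
  then show ?thesis
  proof cases
    case 2 then show ?thesis using assms(3)[of "k-1"] by simp
  next
    case 4 then obtain i where "k = c+2+i" by (metis le_iff_add)
    then show ?thesis using assms(5)[of i] 4 by simp
  qed (use assms in auto)
qed

lemma gwf_c: "1 \<le> c \<Longrightarrow> gwf (4*c+5) (gsc c)"
  unfolding gwf_def gsc_def
proof (intro allI impI)
  fix j assume c: "1 \<le> c" and j: "j < length (map (gfun c) [0..<6 * c + 7])"
  have zok: "wire_ok n (7+4*c+i) (zw c i)" for n i using c by (simp add: zw_def wire_ok_def)
  have "wire_ok (4*c+5) j (fst (gfun c j)) \<and> wire_ok (4*c+5) j (snd (gfun c j))"

  proof (rule gall[where P="\<lambda>j. wire_ok (4*c+5) j (fst (gfun c j)) \<and> wire_ok (4*c+5) j (snd (gfun c j))", OF c])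
    show "j < 6*c+7" using j by simp
  qed (use c in \<open>auto simp: g_0 g_1 g_1' g_2 g_3 g_4 g_5 g_6 g_7 g_A g_Z g_L g_H g_OL g_OH wire_ok_def hw_def zw_def\<close>)
  then show "wire_ok (4 * c + 5) j (fst (map (gfun c) [0..<6 * c + 7] ! j)) \<and>
         wire_ok (4 * c + 5) j (snd (map (gfun c) [0..<6 * c + 7] ! j))" using j by simp
qed


lemma wf_c: "1 \<le> c \<Longrightarrow> slp_wf (4*c+5) (gsc c) (outc c)"
  using gwf_c[of c] unfolding slp_wf_def gwf_def
  by (auto simp: outc_def ofun_def wire_ok_def gsc_def)

lemma gv_c: "1 \<le> c \<Longrightarrow> j < 6*c+7 \<Longrightarrow> gate_vals d (gsc c) ! j =
   wire_val d (gate_vals d (gsc c)) (fst (gfun c j)) + wire_val d (gate_vals d (gsc c)) (snd (gfun c j))"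
  using gv_nth[OF gwf_c, of c j d] by (simp add: gsc_def)

lemma gd_c: "1 \<le> c \<Longrightarrow> j < 6*c+7 \<Longrightarrow> gate_depths (gsc c) ! j =
   Suc (max (wire_depth (gate_depths (gsc c)) (fst (gfun c j))) (wire_depth (gate_depths (gsc c)) (snd (gfun c j))))"
  using gd_nth[OF gwf_c, of c j] by (simp add: gsc_def)

lemma circ_val:
  assumes c: "1 \<le> c" and k: "k < 2*c+3"
  shows "wire_val d (gate_vals d (gsc c)) (ofun c k) = rhs d c k"
proof -
  define V where "V = gate_vals d (gsc c)"
  define hv where "hv i = d (2*c+3+i)" for i
  have gv: "V!j = wire_val d V (fst (gfun c j)) + wire_val d V (snd (gfun c j))" if "j < 6*c+7" for j
    using gv_c[OF c that, of d] unfolding V_def .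
  have wh: "wire_val d V (hw c i) = hv i" for i by (simp add: hw_def hv_def)
  have v0: "V!0 = hv 0 + hv (c+2)" using gv[of 0] c by (simp del: add_bit_eq_xor add: g_0 wh)
  have v1: "V!1 = d 0 + hv (c+1)" using gv[of 1] c by (simp del: add_bit_eq_xor add: g_1' wh)
  have v1': "V!(Suc 0) = d 0 + hv (c+1)" using v1 by simp
  have v2: "V!2 = V!1 + V!0" using gv[of 2] c by (simp del: add_bit_eq_xor add: g_2)
  have v3: "V!3 = d (c+1) + hv (2*c+1)" using gv[of 3] c by (simp del: add_bit_eq_xor add: g_3 wh)
  have v4: "V!4 = V!0 + hv c" using gv[of 4] c by (simp del: add_bit_eq_xor add: g_4 wh)
  have v5: "V!5 = V!3 + V!4" using gv[of 5] c by (simp del: add_bit_eq_xor add: g_5)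
  have v6: "V!6 = d (2*c+2) + hv c" using gv[of 6] c by (simp del: add_bit_eq_xor add: g_6 wh)
  have v7: "V!7 = V!6 + hv (c+1)" using gv[of 7] c by (simp del: add_bit_eq_xor add: g_7 wh)
  have vA: "V!(8+i) = hv i + hv (i+1)" if "i < c" for i
    using gv[of "8+i"] c that by (simp del: add_bit_eq_xor add: g_A wh)
  have vZ: "V!(8+c+i) = V!(8+i) + hv (c+3+i)" if "i+1 < c" for i
    using gv[of "8+c+i"] c that by (simp del: add_bit_eq_xor add: g_Z wh)
  have vL: "V!(7+2*c+i) = d (i+1) + hv (c+1+i)" if "i < c" for i
    using gv[of "7+2*c+i"] c that by (simp del: add_bit_eq_xor add: g_L wh)
  have vH: "V!(7+3*c+i) = d (c+2+i) + hv (c+2+i)" if "i < c" for i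
    using gv[of "7+3*c+i"] c that by (simp del: add_bit_eq_xor add: g_H wh)
  have vOL: "V!(7+4*c+i) = V!(7+2*c+i) + wire_val d V (zw c i)" if "i < c" for i
    using gv[of "7+4*c+i"] c that by (simp del: add_bit_eq_xor add: g_OL)
  have vOH: "V!(7+5*c+i) = V!(7+3*c+i) + wire_val d V (zw c i)" if "i < c" for i
    using gv[of "7+5*c+i"] c that by (simp del: add_bit_eq_xor add: g_OH)
  have vzw: "wire_val d V (zw c i) = hv i + hv (i+1) + (if i+1 = c then 0 else hv (c+3+i))" if "i < c" for i
    using that by (auto simp: zw_def vA vZ)
  have "wire_val d V (ofun c k) = rhs d c k"
  proof (rule oall[OF k])
    show "wire_val d V (ofun c 0) = rhs d c 0"
      using c by (simp add: ofun_def v2 v1' v0 rhs_def ghf_def gf_def hf_def hv_def add_ac del: add_bit_eq_xor)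
  next
    fix i assume i: "i < c"
    have o: "ofun c (i+1) = Gate (7+4*c+i)" using i by (simp add: ofun_def)
    show "wire_val d V (ofun c (i+1)) = rhs d c (i+1)"
      unfolding o wire_val.simps vOL[OF i] vL[OF i] vzw[OF i] using i by (cases "c = i+1") (simp_all add: rhs_def ghf_def gf_def hf_def hv_def add_ac del: add_bit_eq_xor)
  next
    show "wire_val d V (ofun c (c+1)) = rhs d c (c+1)"
      using c by (simp add: ofun_def v5 v4 v3 v0 rhs_def ghf_def gf_def hf_def hv_def add_ac del: add_bit_eq_xor)
  next
    fix i assume i: "i < c"
    have o: "ofun c (c+2+i) = Gate (7+5*c+i)" using i by (simp add: ofun_def)
    show "wire_val d V (ofun c (c+2+i)) = rhs d c (c+2+i)"
      unfolding o wire_val.simps vOH[OF i] vH[OF i] vzw[OF i] using i by (cases "c = i+1") (simp_all add: rhs_def ghf_def gf_def hf_def hv_def add_ac del: add_bit_eq_xor)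
  next
    show "wire_val d V (ofun c (2*c+2)) = rhs d c (2*c+2)"
      using c by (simp add: ofun_def v7 v6 rhs_def ghf_def gf_def hf_def hv_def add_ac del: add_bit_eq_xor)
  qed
  then show ?thesis by (simp add: V_def)
qed


lemma circ_depth:
  assumes c: "1 \<le> c"
  shows "slp_depth (gsc c) (outc c) = 3"
proof -
  define Dp where "Dp = gate_depths (gsc c)"
  have gd: "Dp!j = Suc (max (wire_depth Dp (fst (gfun c j))) (wire_depth Dp (snd (gfun c j))))" if "j < 6*c+7" for j
    using gd_c[OF c that] unfolding Dp_def .
  have wh: "wire_depth Dp (hw c i) = 0" for i by (simp add: hw_def)
  have d0: "Dp!0 = 1" using gd[of 0] c by (simp add: g_0 wh)
  have d1: "Dp!1 = 1" using gd[of 1] c by (simp add: g_1' wh)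
  have d3: "Dp!3 = 1" using gd[of 3] c by (simp add: g_3 wh)
  have d4: "Dp!4 = 2" using gd[of 4] c by (simp add: g_4 wh d0)
  have d5: "Dp!5 = 3" using gd[of 5] c by (simp add: g_5 d3 d4)
  have d2: "Dp!2 = 2" using gd[of 2] c d1 by (simp add: g_2 d0)
  have d6: "Dp!6 = 1" using gd[of 6] c by (simp add: g_6 wh)
  have d7: "Dp!7 = 2" using gd[of 7] c by (simp add: g_7 wh d6)
  have dA: "Dp!(8+i) = 1" if "i < c" for i using gd[of "8+i"] that by (simp add: g_A wh)
  have dZ: "Dp!(8+c+i) = 2" if "i+1 < c" for i using gd[of "8+c+i"] that by (simp add: g_Z wh dA)
  have dL: "Dp!(7+2*c+i) = 1" if "i < c" for i using gd[of "7+2*c+i"] that by (simp add: g_L wh)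
  have dH: "Dp!(7+3*c+i) = 1" if "i < c" for i using gd[of "7+3*c+i"] that by (simp add: g_H wh)
  have dzw: "wire_depth Dp (zw c i) \<le> 2" if "i < c" for i
    using that by (auto simp: zw_def dA dZ)
  have dOL: "Dp!(7+4*c+i) \<le> 3" if "i < c" for i using gd[of "7+4*c+i"] that dzw[OF that] by (simp add: g_OL dL)
  have dOH: "Dp!(7+5*c+i) \<le> 3" if "i < c" for i using gd[of "7+5*c+i"] that dzw[OF that] by (simp add: g_OH dH)
  have all: "wire_depth Dp (ofun c k) \<le> 3" if "k < 2*c+3" for k
  proof (rule oall[OF that])
    fix i assume i: "i < c"
    have o: "ofun c (i+1) = Gate (7+4*c+i)" using i by (simp add: ofun_def)
    show "wire_depth Dp (ofun c (i+1)) \<le> 3" unfolding o using dOL[OF i] by simp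
  next
    fix i assume i: "i < c"
    have o: "ofun c (c+2+i) = Gate (7+5*c+i)" using i by (simp add: ofun_def)
    show "wire_depth Dp (ofun c (c+2+i)) \<le> 3" unfolding o using dOH[OF i] by simp
  qed (use c d2 d5 d7 in \<open>simp_all add: ofun_def\<close>)
  have five: "wire_depth Dp (ofun c (c+1)) = 3" using c d5 by (simp add: ofun_def)
  have mem: "ofun c (c+1) \<in> set (outc c)" unfolding outc_def by simp
  have "Max (set (map (wire_depth Dp) (outc c))) = 3"
  proof (rule Max_eqI)
    show "3 \<in> set (map (wire_depth Dp) (outc c))" using mem five by (metis image_eqI set_map)
  next
    fix y assume "y \<in> set (map (wire_depth Dp) (outc c))"
    then obtain k where "k < 2*c+3" "y = wire_depth Dp (ofun c k)" unfolding outc_def by auto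
    then show "y \<le> 3" using all by blast
  qed simp
  then show ?thesis unfolding slp_depth_def Dp_def .
qed


theorem theorem1:
  fixes b :: nat
  assumes "b \<ge> 2"
  defines "m \<equiv> 2 * b + 1"
  shows "\<exists>(gs :: slp) (outs :: wire list).
           slp_wf (2 * m - 1) gs outs
         \<and> length gs = 6 * b + 1
         \<and> length outs = m
         \<and> slp_depth gs outs = 3
         \<and> (\<forall>d :: nat \<Rightarrow> bit. \<forall>k < m.
              slp_eval gs outs d ! k
                = coeff ((\<Sum>i < 2 * m - 1. monom (d i) i) mod pentanomial b) k)"
proof -
  obtain c where bc: "b = Suc c" using assms(1) by (cases b) auto
  have c: "1 \<le> c" using assms(1) bc by simp
  have m1: "2 * m - 1 = 4*c+5" and mm: "m = 2*c+3" using bc by (simp_all add: m_def)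
  show ?thesis
  proof (intro exI conjI allI impI)
    show "slp_wf (2 * m - 1) (gsc c) (outc c)" unfolding m1 by (rule wf_c[OF c])
    show "length (gsc c) = 6 * b + 1" using bc by (simp add: gsc_def)
    show "length (outc c) = m" using mm by (simp add: outc_def)
    show "slp_depth (gsc c) (outc c) = 3" by (rule circ_depth[OF c])
  next
    fix d :: "nat \<Rightarrow> bit" and k assume k: "k < m"
    have "slp_eval (gsc c) (outc c) d ! k = wire_val d (gate_vals d (gsc c)) (ofun c k)"
      using k mm by (simp add: slp_eval_def outc_def)
    also have "\<dots> = rhs d c k" using circ_val[OF c] k mm by simp
    also have "\<dots> = coeff ((\<Sum>i < 4*c+5. monom (d i) i) mod pentanomial (Suc c)) k"
      using remainder[of k c d] k mm by simp
    finally show "slp_eval (gsc c) (outc c) d ! k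
                = coeff ((\<Sum>i < 2 * m - 1. monom (d i) i) mod pentanomial b) k" unfolding m1 bc .
  qed
qed

end
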